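(* Let $ABC$ be a triangle with incenter $I$ and orthocenter $H$, and let $H_A, H_B, H_C$ be the orthocenters of the triangles $BIC$, $CIA$, $AIB$ respectively. The circumcircles of the triangles $AH_BH_C$, $BH_CH_A$, $CH_AH_B$ pass through a common point $X$. Let $O_A, O_B, O_C$ be the circumcenters of these three triangles and let $O_r$ be the circumcenter of triangle $O_AO_BO_C$. Then $X$ lies on the line $O_rH$. *)

theory Defs
  imports "HOL-Analysis.Analysis"
begin

definition triangle :: "complex \<Rightarrow> complex \<Rightarrow> complex \<Rightarrow> bool" where
  "triangle A B C \<longleftrightarrow> \<not> collinear {A, B, C}"

definition incenter :: "complex \<Rightarrow> complex \<Rightarrow> complex \<Rightarrow> complex" where
  "incenter A B C =
     (dist B C *\<^sub>R A + dist C A *\<^sub>R B + dist A B *\<^sub>R C) /\<^sub>R (dist B C + dist C A + dist A B)"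

definition orthocenter :: "complex \<Rightarrow> complex \<Rightarrow> complex \<Rightarrow> complex" where
  "orthocenter A B C =
     (THE H. inner (H - A) (B - C) = 0 \<and> inner (H - B) (C - A) = 0 \<and> inner (H - C) (A - B) = 0)"

definition circumcenter :: "complex \<Rightarrow> complex \<Rightarrow> complex \<Rightarrow> complex" where
  "circumcenter A B C = (THE Z. dist Z A = dist Z B \<and> dist Z B = dist Z C)"

definition on_circumcircle :: "complex \<Rightarrow> complex \<Rightarrow> complex \<Rightarrow> complex \<Rightarrow> bool" where
  "on_circumcircle X P Q R \<longleftrightarrow> dist X (circumcenter P Q R) = dist P (circumcenter P Q R)"

end

theory Submission
  imports Defs
begin


definition G :: "real \<Rightarrow> real \<Rightarrow> real \<Rightarrow> real \<Rightarrow> real \<Rightarrow> real \<Rightarrow> real \<Rightarrow> real" where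
 "G x y z p1 q1 p2 q2 = p1*p2*(x+y)^2 + (p1*q2+q1*p2)*(x^2+x*y+x*z-y*z) + q1*q2*(z+x)^2"

definition pt :: "complex \<Rightarrow> complex \<Rightarrow> complex \<Rightarrow> real \<Rightarrow> real \<Rightarrow> complex" where
 "pt A u v p q = A + complex_of_real p * u + complex_of_real q * v"

lemma cross_collinear_iff:
  fixes P Q R :: complex
  shows "collinear {P, Q, R} \<longleftrightarrow> Im (cnj (Q - P) * (R - P)) = 0"
proof -
  have "collinear {P, Q, R} = collinear {Q, P, R}" by (simp add: insert_commute)
  also have "\<dots> = collinear {0, Q - P, R - P}"
    using collinear_3[of Q P R] by (simp add: NO_MATCH_def)
  also have "\<dots> \<longleftrightarrow> Im (cnj (Q - P) * (R - P)) = 0"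
  proof
    assume "collinear {0, Q - P, R - P}"
    then have "Q - P = 0 \<or> R - P = 0 \<or> (\<exists>c. R - P = c *\<^sub>R (Q - P))"
      by (simp add: collinear_lemma)
    moreover have "Im (cnj (Q - P) * (R - P)) = 0" if "R - P = c *\<^sub>R (Q - P)" for c
    proof -
      have "Im (cnj (Q - P) * (R - P)) = Im (cnj (Q - P) * (c *\<^sub>R (Q - P)))" using that by simp
      also have "\<dots> = c * Im (cnj (Q - P) * (Q - P))" by simp
      also have "\<dots> = 0" by (simp add: algebra_simps)
      finally show ?thesis .
    qed
    ultimately show "Im (cnj (Q - P) * (R - P)) = 0"
    proof (elim disjE exE)
      assume "Q - P = 0" then show ?thesis by simp
    next
      assume "R - P = 0" then show ?thesis by simp
    next
      fix c assume "R - P = c *\<^sub>R (Q - P)"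
        "\<And>c. R - P = c *\<^sub>R (Q - P) \<Longrightarrow> Im (cnj (Q - P) * (R - P)) = 0"
      then show ?thesis by blast
    qed
  next
    assume h: "Im (cnj (Q - P) * (R - P)) = 0"
    show "collinear {0, Q - P, R - P}"
    proof (cases "Q - P = 0")
      case True then show ?thesis by (simp add: collinear_lemma)
    next
      case False
      define w where "w = Q - P"
      define t where "t = R - P"
      define c where "c = Re (cnj w * t) / (cmod w)^2"
      have n: "(cmod w)^2 \<noteq> 0" using False w_def by simp
      have r: "cnj w * t = complex_of_real (Re (cnj w * t))"
        using h unfolding w_def t_def by (simp add: complex_eq_iff)
      have "complex_of_real ((cmod w)^2) * t = w * (cnj w * t)"
        by (simp only: complex_norm_square mult.assoc mult.commute[of "cnj w"] mult.left_commute[of "cnj w"])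
      also have "\<dots> = complex_of_real (Re (cnj w * t)) * w" using r by simp
      finally have e: "complex_of_real ((cmod w)^2) * t = complex_of_real (Re (cnj w * t)) * w" .
      have "t = c *\<^sub>R w"
      proof -
        have "t = complex_of_real ((cmod w)^2) * t / complex_of_real ((cmod w)^2)"
          using n by simp
        also have "\<dots> = c *\<^sub>R w" unfolding e c_def using n
          by (simp add: scaleR_conv_of_real)
        finally show ?thesis .
      qed
      then have "R - P = c *\<^sub>R (Q - P)" unfolding w_def t_def .
      then show ?thesis by (auto simp: collinear_lemma)
    qed
  qed
  finally show ?thesis .
qed

lemma perp_unique:
  fixes w s t :: complex
  assumes "inner w s = 0" "inner w t = 0" "Im (cnj s * t) \<noteq> 0"
  shows "w = 0"
proof -
  have e1: "Re w * Re s + Im w * Im s = 0" "Re w * Re t + Im w * Im t = 0"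
    using assms by (auto simp: inner_complex_def)
  have d: "Re s * Im t - Im s * Re t \<noteq> 0" using assms(3) by simp
  have "Re w * (Re s * Im t - Im s * Re t) = 0" using e1 by algebra
  then have "Re w = 0" using d by simp
  have "Im w * (Re s * Im t - Im s * Re t) = 0" using e1 by algebra
  then have "Im w = 0" using d by simp
  show ?thesis using \<open>Re w = 0\<close> \<open>Im w = 0\<close> by (simp add: complex_eq_iff)
qed

lemma orth_eq:
  fixes P Q R H :: complex
  assumes "\<not> collinear {P, Q, R}"
    and "inner (H - P) (Q - R) = 0" "inner (H - Q) (R - P) = 0" "inner (H - R) (P - Q) = 0"
  shows "orthocenter P Q R = H"
  unfolding orthocenter_def
proof (rule the_equality)
  show "inner (H - P) (Q - R) = 0 \<and> inner (H - Q) (R - P) = 0 \<and> inner (H - R) (P - Q) = 0"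
    using assms by simp
next
  fix H' assume h: "inner (H' - P) (Q - R) = 0 \<and> inner (H' - Q) (R - P) = 0 \<and> inner (H' - R) (P - Q) = 0"
  have c: "Im (cnj (Q - P) * (R - P)) \<noteq> 0" using assms(1) cross_collinear_iff by blast
  have c2: "Im (cnj (Q - R) * (R - P)) \<noteq> 0"
  proof -
    have "Im (cnj (Q - R) * (R - P)) = Im (cnj (Q - P) * (R - P))" by (simp add: algebra_simps)
    then show ?thesis using c by simp
  qed
  have i1: "inner (H' - H) (Q - R) = 0"
  proof -
    have "inner (H' - H) (Q - R) = inner (H' - P) (Q - R) - inner (H - P) (Q - R)"
      by (simp add: inner_diff_left)
    then show ?thesis using h assms by simp
  qed
  have i2: "inner (H' - H) (R - P) = 0"
  proof -
    have "inner (H' - H) (R - P) = inner (H' - Q) (R - P) - inner (H - Q) (R - P)"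
      by (simp add: inner_diff_left)
    then show ?thesis using h assms by simp
  qed
  have "H' - H = 0" using perp_unique[OF i1 i2 c2] .
  then show "H' = H" by simp
qed

lemma dist_sq_complex: "(dist (a::complex) b)^2 = (Re a - Re b)^2 + (Im a - Im b)^2"
  by (simp add: dist_norm cmod_def)

lemma equidist_inner:
  fixes Z Z' P Q :: complex
  assumes "dist Z P = dist Z Q" "dist Z' P = dist Z' Q"
  shows "inner (Z' - Z) (Q - P) = 0"
proof -
  have a: "(Re Z - Re P)^2 + (Im Z - Im P)^2 = (Re Z - Re Q)^2 + (Im Z - Im Q)^2"
    using assms(1) dist_sq_complex by metis
  have b: "(Re Z' - Re P)^2 + (Im Z' - Im P)^2 = (Re Z' - Re Q)^2 + (Im Z' - Im Q)^2"
    using assms(2) dist_sq_complex by metis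
  have "(Re Z' - Re Z) * (Re Q - Re P) + (Im Z' - Im Z) * (Im Q - Im P) = 0"
    using a b by algebra
  then show ?thesis by (simp add: inner_complex_def)
qed

lemma circ_eq:
  fixes P Q R Z :: complex
  assumes "\<not> collinear {P, Q, R}"
    and "dist Z P = dist Z Q" "dist Z Q = dist Z R"
  shows "circumcenter P Q R = Z"
  unfolding circumcenter_def
proof (rule the_equality)
  show "dist Z P = dist Z Q \<and> dist Z Q = dist Z R" using assms by simp
next
  fix Z' assume h: "dist Z' P = dist Z' Q \<and> dist Z' Q = dist Z' R"
  have c: "Im (cnj (Q - P) * (R - P)) \<noteq> 0" using assms(1) cross_collinear_iff by blast
  have c2: "Im (cnj (Q - P) * (R - Q)) \<noteq> 0"
  proof -
    have "Im (cnj (Q - P) * (R - Q)) = Im (cnj (Q - P) * (R - P))" by (simp add: algebra_simps)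
    then show ?thesis using c by simp
  qed
  have i1: "inner (Z' - Z) (Q - P) = 0" using equidist_inner assms h by blast
  have i2: "inner (Z' - Z) (R - Q) = 0" using equidist_inner assms h by blast
  have "Z' - Z = 0" using perp_unique[OF i1 i2 c2] .
  then show "Z' = Z" by simp
qed

lemma pt_diff: "pt A u v p1 q1 - pt A u v p2 q2 = (p1 - p2) *\<^sub>R u + (q1 - q2) *\<^sub>R v"
  by (simp add: pt_def scaleR_conv_of_real algebra_simps)

lemma gram_pt:
  assumes "inner u u = (x+y)^2" "inner v v = (z+x)^2" "inner u v = x^2+x*y+x*z-y*z"
  shows "inner (pt A u v p1 q1 - pt A u v p2 q2) (pt A u v p3 q3 - pt A u v p4 q4)
     = G x y z (p1-p2) (q1-q2) (p3-p4) (q3-q4)"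
  unfolding pt_diff
  by (simp add: inner_add_left inner_add_right inner_commute[of v u] assms G_def algebra_simps)

lemma cross_pt:
  "Im (cnj (pt A u v p1 q1 - pt A u v p2 q2) * (pt A u v p3 q3 - pt A u v p4 q4))
     = ((p1-p2)*(q3-q4) - (q1-q2)*(p3-p4)) * Im (cnj u * v)"
  unfolding pt_diff by (simp add: algebra_simps)

lemma G_frac:
  assumes "d1 \<noteq> 0" "d2 \<noteq> 0" "d3 \<noteq> 0" "d4 \<noteq> 0"
  shows "G x y z (a1/d1 - b1/d2) (a2/d1 - b2/d2) (c1/d3 - e1/d4) (c2/d3 - e2/d4)
     = G x y z (d2*a1 - d1*b1) (d2*a2 - d1*b2) (d4*c1 - d3*e1) (d4*c2 - d3*e2) / (d1*d2*d3*d4)"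
  using assms by (simp add: G_def field_simps)

lemma inner_frac:
  assumes "inner u u = (x+y)^2" "inner v v = (z+x)^2" "inner u v = x^2+x*y+x*z-y*z"
  assumes "d1 \<noteq> 0" "d2 \<noteq> 0" "d3 \<noteq> 0" "d4 \<noteq> 0"
    and "G x y z (d2*a1 - d1*b1) (d2*a2 - d1*b2) (d4*c1 - d3*e1) (d4*c2 - d3*e2) = 0"
  shows "inner (pt A u v (a1/d1) (a2/d1) - pt A u v (b1/d2) (b2/d2))
                (pt A u v (c1/d3) (c2/d3) - pt A u v (e1/d4) (e2/d4)) = 0"
  unfolding gram_pt[OF assms(1-3)] G_frac[OF assms(4-7)] using assms(8) by simp

lemma dist_frac:
  assumes "inner u u = (x+y)^2" "inner v v = (z+x)^2" "inner u v = x^2+x*y+x*z-y*z"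
  assumes "d1 \<noteq> 0" "d2 \<noteq> 0" "e \<noteq> 0"
  shows "dist (pt A u v (a1/d1) (a2/d1)) (pt A u v (w1/e) (w2/e)) = dist (pt A u v (b1/d2) (b2/d2)) (pt A u v (w1/e) (w2/e))
     \<longleftrightarrow> G x y z (e*a1 - d1*w1) (e*a2 - d1*w2) (e*a1 - d1*w1) (e*a2 - d1*w2) * d2^2
        = G x y z (e*b1 - d2*w1) (e*b2 - d2*w2) (e*b1 - d2*w1) (e*b2 - d2*w2) * d1^2"
proof -
  have sq: "\<And>P Q. (dist P Q)^2 = inner (P - Q) (P - Q)"
    by (simp add: dist_norm power2_norm_eq_inner)
  let ?P = "pt A u v (a1/d1) (a2/d1)" and ?Q = "pt A u v (b1/d2) (b2/d2)" and ?O = "pt A u v (w1/e) (w2/e)"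
  have "dist ?P ?O = dist ?Q ?O \<longleftrightarrow> (dist ?P ?O)^2 = (dist ?Q ?O)^2"
    by (simp add: power2_eq_iff_nonneg)
  also have "\<dots> \<longleftrightarrow> G x y z (e*a1 - d1*w1) (e*a2 - d1*w2) (e*a1 - d1*w1) (e*a2 - d1*w2) / (d1*e*d1*e)
      = G x y z (e*b1 - d2*w1) (e*b2 - d2*w2) (e*b1 - d2*w1) (e*b2 - d2*w2) / (d2*e*d2*e)"
    unfolding sq gram_pt[OF assms(1-3)] G_frac[OF assms(4,6,4,6)] G_frac[OF assms(5,6,5,6)] ..
  also have "\<dots> \<longleftrightarrow> G x y z (e*a1 - d1*w1) (e*a2 - d1*w2) (e*a1 - d1*w1) (e*a2 - d1*w2) * d2^2
        = G x y z (e*b1 - d2*w1) (e*b2 - d2*w2) (e*b1 - d2*w1) (e*b2 - d2*w2) * d1^2"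
    using assms(4-6) by (simp add: field_simps power2_eq_square)
  finally show ?thesis .
qed

lemma basis_pt:
  assumes "Im (cnj u * v) \<noteq> 0"
  shows "\<exists>p q. X = pt A u v p q"
proof -
  define d where "d = Im (cnj u * v)"
  define w where "w = X - A"
  define p where "p = Im (cnj w * v) / d"
  define q where "q = Im (cnj u * w) / d"
  have d: "d \<noteq> 0" using assms d_def by simp
  have key: "complex_of_real (Im (cnj w * v)) * u + complex_of_real (Im (cnj u * w)) * v = complex_of_real d * w"
    unfolding d_def by (simp add: complex_eq_iff algebra_simps)
  have "pt A u v p q = A + (complex_of_real (Im (cnj w * v)) * u + complex_of_real (Im (cnj u * w)) * v) / complex_of_real d"
    by (simp add: pt_def p_def q_def add_divide_distrib)
  also have "\<dots> = A + w" unfolding key using d by simp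
  also have "\<dots> = X" by (simp add: w_def)
  finally show ?thesis by metis
qed

lemma cross_frac:
  assumes "d1 \<noteq> 0" "d2 \<noteq> 0" "d3 \<noteq> 0" "d4 \<noteq> 0"
  shows "Im (cnj (pt A u v (a1/d1) (a2/d1) - pt A u v (b1/d2) (b2/d2)) * (pt A u v (c1/d3) (c2/d3) - pt A u v (e1/d4) (e2/d4)))
     = ((d2*a1 - d1*b1)*(d4*c2 - d3*e2) - (d2*a2 - d1*b2)*(d4*c1 - d3*e1)) / (d1*d2*d3*d4) * Im (cnj u * v)"
  unfolding cross_pt using assms by (simp add: field_simps)

lemma cross_frac_nz:
  assumes "(d2*a1 - d1*b1)*(d4*c2 - d3*e2) - (d2*a2 - d1*b2)*(d4*c1 - d3*e1) = K" "K \<noteq> 0"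
    "d1 \<noteq> 0" "d2 \<noteq> 0" "d3 \<noteq> 0" "d4 \<noteq> 0" "Im (cnj u * v) \<noteq> 0"
  shows "Im (cnj (pt A u v (a1/d1) (a2/d1) - pt A u v (b1/d2) (b2/d2)) * (pt A u v (c1/d3) (c2/d3) - pt A u v (e1/d4) (e2/d4))) \<noteq> 0"
  unfolding cross_frac[OF assms(3-6)] using assms by simp

lemma cross_frac_zero:
  assumes "(d2*a1 - d1*b1)*(d4*c2 - d3*e2) - (d2*a2 - d1*b2)*(d4*c1 - d3*e1) = 0"
    "d1 \<noteq> 0" "d2 \<noteq> 0" "d3 \<noteq> 0" "d4 \<noteq> 0"
  shows "Im (cnj (pt A u v (a1/d1) (a2/d1) - pt A u v (b1/d2) (b2/d2)) * (pt A u v (c1/d3) (c2/d3) - pt A u v (e1/d4) (e2/d4))) = 0"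
  unfolding cross_frac[OF assms(2-5)] using assms by simp

lemma cross_frac_D:
  assumes "Im (cnj (pt A u v (a1/d1) (a2/d1) - pt A u v (b1/d2) (b2/d2)) * (pt A u v (c1/d3) (c2/d3) - pt A u v (e1/d4) (e2/d4))) \<noteq> 0"
    "d1 \<noteq> 0" "d2 \<noteq> 0" "d3 \<noteq> 0" "d4 \<noteq> 0"
  shows "(d2*a1 - d1*b1)*(d4*c2 - d3*e2) - (d2*a2 - d1*b2)*(d4*c1 - d3*e1) \<noteq> 0"
  using assms(1) unfolding cross_frac[OF assms(2-5)] by auto

lemma inner_frac_I:
  assumes "inner u u = (x+y)^2" "inner v v = (z+x)^2" "inner u v = x^2+x*y+x*z-y*z"
    and "G x y z (d2*a1 - d1*b1) (d2*a2 - d1*b2) (d4*c1 - d3*e1) (d4*c2 - d3*e2) = 0"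
    and "d1 \<noteq> 0" "d2 \<noteq> 0" "d3 \<noteq> 0" "d4 \<noteq> 0"
  shows "inner (pt A u v (a1/d1) (a2/d1) - pt A u v (b1/d2) (b2/d2))
                (pt A u v (c1/d3) (c2/d3) - pt A u v (e1/d4) (e2/d4)) = 0"
  using inner_frac[OF assms(1-3) assms(5-8) assms(4)] .

lemma dist_frac_I:
  assumes "inner u u = (x+y)^2" "inner v v = (z+x)^2" "inner u v = x^2+x*y+x*z-y*z"
    and "G x y z (e*a1 - d1*w1) (e*a2 - d1*w2) (e*a1 - d1*w1) (e*a2 - d1*w2) * d2^2
        = G x y z (e*b1 - d2*w1) (e*b2 - d2*w2) (e*b1 - d2*w1) (e*b2 - d2*w2) * d1^2"
    and "d1 \<noteq> 0" "d2 \<noteq> 0" "e \<noteq> 0"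
  shows "dist (pt A u v (a1/d1) (a2/d1)) (pt A u v (w1/e) (w2/e)) = dist (pt A u v (b1/d2) (b2/d2)) (pt A u v (w1/e) (w2/e))"
  using dist_frac[OF assms(1-3) assms(5-7)] assms(4) by blast

lemma dist_frac_D:
  assumes "inner u u = (x+y)^2" "inner v v = (z+x)^2" "inner u v = x^2+x*y+x*z-y*z"
    and "dist (pt A u v (a1/d1) (a2/d1)) (pt A u v (w1/e) (w2/e)) = dist (pt A u v (b1/d2) (b2/d2)) (pt A u v (w1/e) (w2/e))"
    and "d1 \<noteq> 0" "d2 \<noteq> 0" "e \<noteq> 0"
  shows "G x y z (e*a1 - d1*w1) (e*a2 - d1*w2) (e*a1 - d1*w1) (e*a2 - d1*w2) * d2^2
        = G x y z (e*b1 - d2*w1) (e*b2 - d2*w2) (e*b1 - d2*w1) (e*b2 - d2*w2) * d1^2"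
  using dist_frac[OF assms(1-3) assms(5-7)] assms(4) by blast


theorem proposition5p6:
  fixes A B C :: complex
  assumes "triangle A B C"
  defines "I \<equiv> incenter A B C"
      and "H \<equiv> orthocenter A B C"
  defines "HA \<equiv> orthocenter B I C"
      and "HB \<equiv> orthocenter C I A"
      and "HC \<equiv> orthocenter A I B"
  defines "OA \<equiv> circumcenter A HB HC"
      and "OB \<equiv> circumcenter B HC HA"
      and "OC \<equiv> circumcenter C HA HB"
  defines "Or \<equiv> circumcenter OA OB OC"
  assumes "triangle A HB HC" and "triangle B HC HA" and "triangle C HA HB"
      and "triangle OA OB OC"
  shows "(\<exists>X. on_circumcircle X A HB HC \<and> on_circumcircle X B HC HA \<and> on_circumcircle X C HA HB)
       \<and> (\<forall>X. on_circumcircle X A HB HC \<and> on_circumcircle X B HC HA \<and> on_circumcircle X C HA HB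
              \<longrightarrow> collinear {Or, H, X})"
  proof -
  define a where "a = dist B C"
  define b where "b = dist C A"
  define c where "c = dist A B"
  define x where "x = (b + c - a) / 2"
  define y where "y = (c + a - b) / 2"
  define z where "z = (a + b - c) / 2"
  define u where "u = B - A"
  define v where "v = C - A"
  have abc: "a = y + z" "b = z + x" "c = x + y" unfolding x_def y_def z_def by (simp_all add: field_simps)
  have t1: "a \<le> c + b" unfolding a_def b_def c_def using dist_triangle[of B C A] by (simp add: dist_commute)
  have t2: "b \<le> a + c" unfolding a_def b_def c_def using dist_triangle[of C A B] by (simp add: dist_commute)
  have t3: "c \<le> b + a" unfolding a_def b_def c_def using dist_triangle[of A B C] by (simp add: dist_commute)
  have x0: "x \<ge> 0" "y \<ge> 0" "z \<ge> 0" using t1 t2 t3 unfolding x_def y_def z_def by simp_all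
  have nu: "norm u = c" unfolding u_def c_def by (simp add: dist_norm norm_minus_commute)
  have nv: "norm v = b" unfolding v_def b_def by (simp add: dist_norm)
  have nuv: "norm (u - v) = a" unfolding u_def v_def a_def by (simp add: dist_norm)
  have gu: "inner u u = (x+y)^2" using nu abc by (simp add: power2_norm_eq_inner[symmetric])
  have gv: "inner v v = (z+x)^2" using nv abc by (simp add: power2_norm_eq_inner[symmetric])
  have "inner (u - v) (u - v) = a^2" using nuv by (simp add: power2_norm_eq_inner[symmetric])
  then have "inner u u - 2 * inner u v + inner v v = a^2"
    by (simp add: inner_diff_left inner_diff_right inner_commute[of v u])
  then have guv: "inner u v = x^2+x*y+x*z-y*z" unfolding gu gv abc by algebra
  have tri: "\<not> collinear {A, B, C}" using assms(1) unfolding triangle_def .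
  have Dnz: "Im (cnj u * v) \<noteq> 0" using tri cross_collinear_iff[of A B C] unfolding u_def v_def by simp
  have lag: "(Im (cnj u * v))^2 = inner u u * inner v v - (inner u v)^2"
    by (simp add: inner_complex_def) algebra
  have e4: "4 * (x+y+z) * x * y * z = (Im (cnj u * v))^2" unfolding lag gu gv guv by algebra
  have "(Im (cnj u * v))^2 \<noteq> 0" using Dnz by simp
  then have "4 * (x+y+z) * x * y * z \<noteq> 0" using e4 by metis
  then have prodnz: "(x+y+z) * x * y * z \<noteq> 0" by simp
  have xnz: "x \<noteq> 0" and ynz: "y \<noteq> 0" and znz: "z \<noteq> 0" and snz: "x+y+z \<noteq> 0" using prodnz by auto
  have pos: "x > 0" "y > 0" "z > 0" "x + y + z > 0" using x0 xnz ynz znz by auto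
  have Ap: "pt A u v (0/1) (0/1) = A" by (simp add: pt_def)
  have Bp: "pt A u v (1/1) (0/1) = B" by (simp add: pt_def u_def)
  have Cp: "pt A u v (0/1) (1/1) = C" by (simp add: pt_def v_def)
  have Ip: "pt A u v ((x + z)/(2*(x+y+z))) ((x + y)/(2*(x+y+z))) = I"
  proof -
    define S where "S = a + b + c"
    have sabc: "S = 2*(x+y+z)" using abc unfolding S_def by simp
    have Snz: "S \<noteq> 0" using sabc snz by simp
    have m1: "complex_of_real S * complex_of_real (b/S) = complex_of_real b" unfolding of_real_mult[symmetric] using Snz by simp
    have m2: "complex_of_real S * complex_of_real (c/S) = complex_of_real c" unfolding of_real_mult[symmetric] using Snz by simp
    have "complex_of_real S * (A + complex_of_real (b/S) * u + complex_of_real (c/S) * v)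
        = complex_of_real S * A + (complex_of_real S * complex_of_real (b/S)) * u + (complex_of_real S * complex_of_real (c/S)) * v"
      by (simp add: algebra_simps)
    also have "\<dots> = complex_of_real a * A + complex_of_real b * B + complex_of_real c * C"
      unfolding m1 m2 by (simp add: u_def v_def S_def algebra_simps)
    finally have e: "complex_of_real S * (A + complex_of_real (b/S) * u + complex_of_real (c/S) * v)
        = complex_of_real a * A + complex_of_real b * B + complex_of_real c * C" .
    have "I = (a *\<^sub>R A + b *\<^sub>R B + c *\<^sub>R C) /\<^sub>R S"
      unfolding I_def incenter_def a_def b_def c_def S_def ..
    also have "\<dots> = (complex_of_real a * A + complex_of_real b * B + complex_of_real c * C) / complex_of_real S"
      by (simp add: scaleR_conv_of_real divide_inverse of_real_inverse mult.commute)
    also have "\<dots> = A + complex_of_real (b/S) * u + complex_of_real (c/S) * v"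
      unfolding e[symmetric] using Snz by simp
    finally show ?thesis unfolding pt_def sabc abc by (simp add: add_ac)
  qed
  have nzs: "x \<noteq> 0" "y \<noteq> 0" "z \<noteq> 0" "x+y+z \<noteq> 0" "(1::real) \<noteq> 0" "(2::real) \<noteq> 0" "(4::real) \<noteq> 0" "(8::real) \<noteq> 0"
    using xnz ynz znz snz by simp_all
  have s2: "2*x+2*y+2*z \<noteq> 0" using pos by linarith
  have dnz: "(1::real) \<noteq> 0" "(2*(x+y+z)::real) \<noteq> 0" "(4*x*y*z*(x+y+z)::real) \<noteq> 0" "(2*x::real) \<noteq> 0" "(2*y::real) \<noteq> 0" "(2*z::real) \<noteq> 0" "(4*y*z*(x+y+z)::real) \<noteq> 0" "(4*x*z*(x+y+z)::real) \<noteq> 0" "(4*x*y*(x+y+z)::real) \<noteq> 0" "(8*x*y*z*(x+y+z)::real) \<noteq> 0" using nzs s2 by simp_all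
  have Knz: "-(y) - z \<noteq> (0::real)" "-(x) - z \<noteq> (0::real)" "-(x) - y \<noteq> (0::real)" using pos by linarith+
  have tABC: "\<not> collinear {A, B, C}" by (rule tri)
  have "orthocenter A B C = pt A u v ((-(x^3*y) + x^3*z - x^2*y^2 + x^2*y*z + 2*x^2*z^2 + 2*x*y^2*z + x*y*z^2 + x*z^3 - y^2*z^2 - y*z^3)/(4*x*y*z*(x+y+z))) ((x^3*y - x^3*z + 2*x^2*y^2 + x^2*y*z - x^2*z^2 + x*y^3 + x*y^2*z + 2*x*y*z^2 - y^3*z - y^2*z^2)/(4*x*y*z*(x+y+z)))"
  proof (rule orth_eq)
    show "\<not> collinear {A, B, C}" by (rule tABC)
    have "inner (pt A u v ((-(x^3*y) + x^3*z - x^2*y^2 + x^2*y*z + 2*x^2*z^2 + 2*x*y^2*z + x*y*z^2 + x*z^3 - y^2*z^2 - y*z^3)/(4*x*y*z*(x+y+z))) ((x^3*y - x^3*z + 2*x^2*y^2 + x^2*y*z - x^2*z^2 + x*y^3 + x*y^2*z + 2*x*y*z^2 - y^3*z - y^2*z^2)/(4*x*y*z*(x+y+z))) - pt A u v ((0)/(1)) ((0)/(1))) (pt A u v ((1)/(1)) ((0)/(1)) - pt A u v ((0)/(1)) ((1)/(1))) = 0"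
      by (rule inner_frac_I[OF gu gv guv], unfold G_def, (simp only: power_one mult_1 mult_1_right)?, algebra) (fact dnz)+
    then show "inner (pt A u v ((-(x^3*y) + x^3*z - x^2*y^2 + x^2*y*z + 2*x^2*z^2 + 2*x*y^2*z + x*y*z^2 + x*z^3 - y^2*z^2 - y*z^3)/(4*x*y*z*(x+y+z))) ((x^3*y - x^3*z + 2*x^2*y^2 + x^2*y*z - x^2*z^2 + x*y^3 + x*y^2*z + 2*x*y*z^2 - y^3*z - y^2*z^2)/(4*x*y*z*(x+y+z))) - A) (B - C) = 0" by (simp only: not_False_eq_True Ap Bp Cp)
    have "inner (pt A u v ((-(x^3*y) + x^3*z - x^2*y^2 + x^2*y*z + 2*x^2*z^2 + 2*x*y^2*z + x*y*z^2 + x*z^3 - y^2*z^2 - y*z^3)/(4*x*y*z*(x+y+z))) ((x^3*y - x^3*z + 2*x^2*y^2 + x^2*y*z - x^2*z^2 + x*y^3 + x*y^2*z + 2*x*y*z^2 - y^3*z - y^2*z^2)/(4*x*y*z*(x+y+z))) - pt A u v ((1)/(1)) ((0)/(1))) (pt A u v ((0)/(1)) ((1)/(1)) - pt A u v ((0)/(1)) ((0)/(1))) = 0"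
      by (rule inner_frac_I[OF gu gv guv], unfold G_def, (simp only: power_one mult_1 mult_1_right)?, algebra) (fact dnz)+
    then show "inner (pt A u v ((-(x^3*y) + x^3*z - x^2*y^2 + x^2*y*z + 2*x^2*z^2 + 2*x*y^2*z + x*y*z^2 + x*z^3 - y^2*z^2 - y*z^3)/(4*x*y*z*(x+y+z))) ((x^3*y - x^3*z + 2*x^2*y^2 + x^2*y*z - x^2*z^2 + x*y^3 + x*y^2*z + 2*x*y*z^2 - y^3*z - y^2*z^2)/(4*x*y*z*(x+y+z))) - B) (C - A) = 0" by (simp only: not_False_eq_True Ap Bp Cp)
    have "inner (pt A u v ((-(x^3*y) + x^3*z - x^2*y^2 + x^2*y*z + 2*x^2*z^2 + 2*x*y^2*z + x*y*z^2 + x*z^3 - y^2*z^2 - y*z^3)/(4*x*y*z*(x+y+z))) ((x^3*y - x^3*z + 2*x^2*y^2 + x^2*y*z - x^2*z^2 + x*y^3 + x*y^2*z + 2*x*y*z^2 - y^3*z - y^2*z^2)/(4*x*y*z*(x+y+z))) - pt A u v ((0)/(1)) ((1)/(1))) (pt A u v ((0)/(1)) ((0)/(1)) - pt A u v ((1)/(1)) ((0)/(1))) = 0"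
      by (rule inner_frac_I[OF gu gv guv], unfold G_def, (simp only: power_one mult_1 mult_1_right)?, algebra) (fact dnz)+
    then show "inner (pt A u v ((-(x^3*y) + x^3*z - x^2*y^2 + x^2*y*z + 2*x^2*z^2 + 2*x*y^2*z + x*y*z^2 + x*z^3 - y^2*z^2 - y*z^3)/(4*x*y*z*(x+y+z))) ((x^3*y - x^3*z + 2*x^2*y^2 + x^2*y*z - x^2*z^2 + x*y^3 + x*y^2*z + 2*x*y*z^2 - y^3*z - y^2*z^2)/(4*x*y*z*(x+y+z))) - C) (A - B) = 0" by (simp only: not_False_eq_True Ap Bp Cp)
  qed
  then have Hp: "pt A u v ((-(x^3*y) + x^3*z - x^2*y^2 + x^2*y*z + 2*x^2*z^2 + 2*x*y^2*z + x*y*z^2 + x*z^3 - y^2*z^2 - y*z^3)/(4*x*y*z*(x+y+z))) ((x^3*y - x^3*z + 2*x^2*y^2 + x^2*y*z - x^2*z^2 + x*y^3 + x*y^2*z + 2*x*y*z^2 - y^3*z - y^2*z^2)/(4*x*y*z*(x+y+z))) = H" unfolding H_def by simp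
  have "Im (cnj (pt A u v ((x + z)/(2*(x+y+z))) ((x + y)/(2*(x+y+z))) - pt A u v ((1)/(1)) ((0)/(1))) * (pt A u v ((0)/(1)) ((1)/(1)) - pt A u v ((1)/(1)) ((0)/(1)))) \<noteq> 0"
    by (rule cross_frac_nz[where K="-(y) - z"], algebra) (fact dnz Dnz Knz)+
  then have tBIC: "\<not> collinear {B, I, C}" unfolding cross_collinear_iff by (simp only: not_False_eq_True Ap Bp Cp Hp Ip)
  have "Im (cnj (pt A u v ((x + z)/(2*(x+y+z))) ((x + y)/(2*(x+y+z))) - pt A u v ((0)/(1)) ((1)/(1))) * (pt A u v ((0)/(1)) ((0)/(1)) - pt A u v ((0)/(1)) ((1)/(1)))) \<noteq> 0"
    by (rule cross_frac_nz[where K="-(x) - z"], algebra) (fact dnz Dnz Knz)+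
  then have tCIA: "\<not> collinear {C, I, A}" unfolding cross_collinear_iff by (simp only: not_False_eq_True Ap Bp Cp Hp Ip)
  have "Im (cnj (pt A u v ((x + z)/(2*(x+y+z))) ((x + y)/(2*(x+y+z))) - pt A u v ((0)/(1)) ((0)/(1))) * (pt A u v ((1)/(1)) ((0)/(1)) - pt A u v ((0)/(1)) ((0)/(1)))) \<noteq> 0"
    by (rule cross_frac_nz[where K="-(x) - y"], algebra) (fact dnz Dnz Knz)+
  then have tAIB: "\<not> collinear {A, I, B}" unfolding cross_collinear_iff by (simp only: not_False_eq_True Ap Bp Cp Hp Ip)
  have "orthocenter B I C = pt A u v ((x - z)/(2*x)) ((x - y)/(2*x))"
  proof (rule orth_eq)
    show "\<not> collinear {B, I, C}" by (rule tBIC)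
    have "inner (pt A u v ((x - z)/(2*x)) ((x - y)/(2*x)) - pt A u v ((1)/(1)) ((0)/(1))) (pt A u v ((x + z)/(2*(x+y+z))) ((x + y)/(2*(x+y+z))) - pt A u v ((0)/(1)) ((1)/(1))) = 0"
      by (rule inner_frac_I[OF gu gv guv], unfold G_def, (simp only: power_one mult_1 mult_1_right)?, algebra) (fact dnz)+
    then show "inner (pt A u v ((x - z)/(2*x)) ((x - y)/(2*x)) - B) (I - C) = 0" by (simp only: not_False_eq_True Ap Bp Cp Hp Ip)
    have "inner (pt A u v ((x - z)/(2*x)) ((x - y)/(2*x)) - pt A u v ((x + z)/(2*(x+y+z))) ((x + y)/(2*(x+y+z)))) (pt A u v ((0)/(1)) ((1)/(1)) - pt A u v ((1)/(1)) ((0)/(1))) = 0"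
      by (rule inner_frac_I[OF gu gv guv], unfold G_def, (simp only: power_one mult_1 mult_1_right)?, algebra) (fact dnz)+
    then show "inner (pt A u v ((x - z)/(2*x)) ((x - y)/(2*x)) - I) (C - B) = 0" by (simp only: not_False_eq_True Ap Bp Cp Hp Ip)
    have "inner (pt A u v ((x - z)/(2*x)) ((x - y)/(2*x)) - pt A u v ((0)/(1)) ((1)/(1))) (pt A u v ((1)/(1)) ((0)/(1)) - pt A u v ((x + z)/(2*(x+y+z))) ((x + y)/(2*(x+y+z)))) = 0"
      by (rule inner_frac_I[OF gu gv guv], unfold G_def, (simp only: power_one mult_1 mult_1_right)?, algebra) (fact dnz)+
    then show "inner (pt A u v ((x - z)/(2*x)) ((x - y)/(2*x)) - C) (B - I) = 0" by (simp only: not_False_eq_True Ap Bp Cp Hp Ip)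
  qed
  then have HAp: "pt A u v ((x - z)/(2*x)) ((x - y)/(2*x)) = HA" unfolding HA_def by simp
  have "orthocenter C I A = pt A u v ((x + z)/(2*y)) ((-(x) + y)/(2*y))"
  proof (rule orth_eq)
    show "\<not> collinear {C, I, A}" by (rule tCIA)
    have "inner (pt A u v ((x + z)/(2*y)) ((-(x) + y)/(2*y)) - pt A u v ((0)/(1)) ((1)/(1))) (pt A u v ((x + z)/(2*(x+y+z))) ((x + y)/(2*(x+y+z))) - pt A u v ((0)/(1)) ((0)/(1))) = 0"
      by (rule inner_frac_I[OF gu gv guv], unfold G_def, (simp only: power_one mult_1 mult_1_right)?, algebra) (fact dnz)+
    then show "inner (pt A u v ((x + z)/(2*y)) ((-(x) + y)/(2*y)) - C) (I - A) = 0" by (simp only: not_False_eq_True Ap Bp Cp Hp Ip HAp)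
    have "inner (pt A u v ((x + z)/(2*y)) ((-(x) + y)/(2*y)) - pt A u v ((x + z)/(2*(x+y+z))) ((x + y)/(2*(x+y+z)))) (pt A u v ((0)/(1)) ((0)/(1)) - pt A u v ((0)/(1)) ((1)/(1))) = 0"
      by (rule inner_frac_I[OF gu gv guv], unfold G_def, (simp only: power_one mult_1 mult_1_right)?, algebra) (fact dnz)+
    then show "inner (pt A u v ((x + z)/(2*y)) ((-(x) + y)/(2*y)) - I) (A - C) = 0" by (simp only: not_False_eq_True Ap Bp Cp Hp Ip HAp)
    have "inner (pt A u v ((x + z)/(2*y)) ((-(x) + y)/(2*y)) - pt A u v ((0)/(1)) ((0)/(1))) (pt A u v ((0)/(1)) ((1)/(1)) - pt A u v ((x + z)/(2*(x+y+z))) ((x + y)/(2*(x+y+z)))) = 0"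
      by (rule inner_frac_I[OF gu gv guv], unfold G_def, (simp only: power_one mult_1 mult_1_right)?, algebra) (fact dnz)+
    then show "inner (pt A u v ((x + z)/(2*y)) ((-(x) + y)/(2*y)) - A) (C - I) = 0" by (simp only: not_False_eq_True Ap Bp Cp Hp Ip HAp)
  qed
  then have HBp: "pt A u v ((x + z)/(2*y)) ((-(x) + y)/(2*y)) = HB" unfolding HB_def by simp
  have "orthocenter A I B = pt A u v ((-(x) + z)/(2*z)) ((x + y)/(2*z))"
  proof (rule orth_eq)
    show "\<not> collinear {A, I, B}" by (rule tAIB)
    have "inner (pt A u v ((-(x) + z)/(2*z)) ((x + y)/(2*z)) - pt A u v ((0)/(1)) ((0)/(1))) (pt A u v ((x + z)/(2*(x+y+z))) ((x + y)/(2*(x+y+z))) - pt A u v ((1)/(1)) ((0)/(1))) = 0"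
      by (rule inner_frac_I[OF gu gv guv], unfold G_def, (simp only: power_one mult_1 mult_1_right)?, algebra) (fact dnz)+
    then show "inner (pt A u v ((-(x) + z)/(2*z)) ((x + y)/(2*z)) - A) (I - B) = 0" by (simp only: not_False_eq_True Ap Bp Cp Hp Ip HAp HBp)
    have "inner (pt A u v ((-(x) + z)/(2*z)) ((x + y)/(2*z)) - pt A u v ((x + z)/(2*(x+y+z))) ((x + y)/(2*(x+y+z)))) (pt A u v ((1)/(1)) ((0)/(1)) - pt A u v ((0)/(1)) ((0)/(1))) = 0"
      by (rule inner_frac_I[OF gu gv guv], unfold G_def, (simp only: power_one mult_1 mult_1_right)?, algebra) (fact dnz)+
    then show "inner (pt A u v ((-(x) + z)/(2*z)) ((x + y)/(2*z)) - I) (B - A) = 0" by (simp only: not_False_eq_True Ap Bp Cp Hp Ip HAp HBp)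
    have "inner (pt A u v ((-(x) + z)/(2*z)) ((x + y)/(2*z)) - pt A u v ((1)/(1)) ((0)/(1))) (pt A u v ((0)/(1)) ((0)/(1)) - pt A u v ((x + z)/(2*(x+y+z))) ((x + y)/(2*(x+y+z)))) = 0"
      by (rule inner_frac_I[OF gu gv guv], unfold G_def, (simp only: power_one mult_1 mult_1_right)?, algebra) (fact dnz)+
    then show "inner (pt A u v ((-(x) + z)/(2*z)) ((x + y)/(2*z)) - B) (A - I) = 0" by (simp only: not_False_eq_True Ap Bp Cp Hp Ip HAp HBp)
  qed
  then have HCp: "pt A u v ((-(x) + z)/(2*z)) ((x + y)/(2*z)) = HC" unfolding HC_def by simp
  have tA: "\<not> collinear {A, HB, HC}" using assms(11) unfolding triangle_def .
  have tB: "\<not> collinear {B, HC, HA}" using assms(12) unfolding triangle_def .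
  have tC: "\<not> collinear {C, HA, HB}" using assms(13) unfolding triangle_def .
  have tO: "\<not> collinear {OA, OB, OC}" using assms(14) unfolding triangle_def .
  have "circumcenter A HB HC = pt A u v ((-(x^2*y) + x^2*z - x*y^2 + x*y*z + 2*x*z^2 - y^2*z + 2*y*z^2 + z^3)/(4*y*z*(x+y+z))) ((x^2*y - x^2*z + 2*x*y^2 + x*y*z - x*z^2 + y^3 + 2*y^2*z - y*z^2)/(4*y*z*(x+y+z)))"
  proof (rule circ_eq)
    show "\<not> collinear {A, HB, HC}" by (rule tA)
    have "dist (pt A u v ((0)/(1)) ((0)/(1))) (pt A u v ((-(x^2*y) + x^2*z - x*y^2 + x*y*z + 2*x*z^2 - y^2*z + 2*y*z^2 + z^3)/(4*y*z*(x+y+z))) ((x^2*y - x^2*z + 2*x*y^2 + x*y*z - x*z^2 + y^3 + 2*y^2*z - y*z^2)/(4*y*z*(x+y+z)))) = dist (pt A u v ((x + z)/(2*y)) ((-(x) + y)/(2*y))) (pt A u v ((-(x^2*y) + x^2*z - x*y^2 + x*y*z + 2*x*z^2 - y^2*z + 2*y*z^2 + z^3)/(4*y*z*(x+y+z))) ((x^2*y - x^2*z + 2*x*y^2 + x*y*z - x*z^2 + y^3 + 2*y^2*z - y*z^2)/(4*y*z*(x+y+z))))"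
      by (rule dist_frac_I[OF gu gv guv], unfold G_def, (simp only: power_one mult_1 mult_1_right)?, algebra) (fact dnz)+
    then show "dist (pt A u v ((-(x^2*y) + x^2*z - x*y^2 + x*y*z + 2*x*z^2 - y^2*z + 2*y*z^2 + z^3)/(4*y*z*(x+y+z))) ((x^2*y - x^2*z + 2*x*y^2 + x*y*z - x*z^2 + y^3 + 2*y^2*z - y*z^2)/(4*y*z*(x+y+z)))) A = dist (pt A u v ((-(x^2*y) + x^2*z - x*y^2 + x*y*z + 2*x*z^2 - y^2*z + 2*y*z^2 + z^3)/(4*y*z*(x+y+z))) ((x^2*y - x^2*z + 2*x*y^2 + x*y*z - x*z^2 + y^3 + 2*y^2*z - y*z^2)/(4*y*z*(x+y+z)))) HB" by (simp only: not_False_eq_True Ap Bp Cp Hp Ip HAp HBp HCp dist_commute)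
    have "dist (pt A u v ((x + z)/(2*y)) ((-(x) + y)/(2*y))) (pt A u v ((-(x^2*y) + x^2*z - x*y^2 + x*y*z + 2*x*z^2 - y^2*z + 2*y*z^2 + z^3)/(4*y*z*(x+y+z))) ((x^2*y - x^2*z + 2*x*y^2 + x*y*z - x*z^2 + y^3 + 2*y^2*z - y*z^2)/(4*y*z*(x+y+z)))) = dist (pt A u v ((-(x) + z)/(2*z)) ((x + y)/(2*z))) (pt A u v ((-(x^2*y) + x^2*z - x*y^2 + x*y*z + 2*x*z^2 - y^2*z + 2*y*z^2 + z^3)/(4*y*z*(x+y+z))) ((x^2*y - x^2*z + 2*x*y^2 + x*y*z - x*z^2 + y^3 + 2*y^2*z - y*z^2)/(4*y*z*(x+y+z))))"
      by (rule dist_frac_I[OF gu gv guv], unfold G_def, (simp only: power_one mult_1 mult_1_right)?, algebra) (fact dnz)+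
    then show "dist (pt A u v ((-(x^2*y) + x^2*z - x*y^2 + x*y*z + 2*x*z^2 - y^2*z + 2*y*z^2 + z^3)/(4*y*z*(x+y+z))) ((x^2*y - x^2*z + 2*x*y^2 + x*y*z - x*z^2 + y^3 + 2*y^2*z - y*z^2)/(4*y*z*(x+y+z)))) HB = dist (pt A u v ((-(x^2*y) + x^2*z - x*y^2 + x*y*z + 2*x*z^2 - y^2*z + 2*y*z^2 + z^3)/(4*y*z*(x+y+z))) ((x^2*y - x^2*z + 2*x*y^2 + x*y*z - x*z^2 + y^3 + 2*y^2*z - y*z^2)/(4*y*z*(x+y+z)))) HC" by (simp only: not_False_eq_True Ap Bp Cp Hp Ip HAp HBp HCp dist_commute)
  qed
  then have OAp: "pt A u v ((-(x^2*y) + x^2*z - x*y^2 + x*y*z + 2*x*z^2 - y^2*z + 2*y*z^2 + z^3)/(4*y*z*(x+y+z))) ((x^2*y - x^2*z + 2*x*y^2 + x*y*z - x*z^2 + y^3 + 2*y^2*z - y*z^2)/(4*y*z*(x+y+z))) = OA" unfolding OA_def by simp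
  have "circumcenter B HC HA = pt A u v ((-(x^3) - x^2*y + 3*x^2*z + 2*x*y*z + 3*x*z^2 - y*z^2 - z^3)/(4*x*z*(x+y+z))) ((x^3 + 2*x^2*y + 2*x^2*z + x*y^2 + x*y*z - x*z^2 - y^2*z - y*z^2)/(4*x*z*(x+y+z)))"
  proof (rule circ_eq)
    show "\<not> collinear {B, HC, HA}" by (rule tB)
    have "dist (pt A u v ((1)/(1)) ((0)/(1))) (pt A u v ((-(x^3) - x^2*y + 3*x^2*z + 2*x*y*z + 3*x*z^2 - y*z^2 - z^3)/(4*x*z*(x+y+z))) ((x^3 + 2*x^2*y + 2*x^2*z + x*y^2 + x*y*z - x*z^2 - y^2*z - y*z^2)/(4*x*z*(x+y+z)))) = dist (pt A u v ((-(x) + z)/(2*z)) ((x + y)/(2*z))) (pt A u v ((-(x^3) - x^2*y + 3*x^2*z + 2*x*y*z + 3*x*z^2 - y*z^2 - z^3)/(4*x*z*(x+y+z))) ((x^3 + 2*x^2*y + 2*x^2*z + x*y^2 + x*y*z - x*z^2 - y^2*z - y*z^2)/(4*x*z*(x+y+z))))"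
      by (rule dist_frac_I[OF gu gv guv], unfold G_def, (simp only: power_one mult_1 mult_1_right)?, algebra) (fact dnz)+
    then show "dist (pt A u v ((-(x^3) - x^2*y + 3*x^2*z + 2*x*y*z + 3*x*z^2 - y*z^2 - z^3)/(4*x*z*(x+y+z))) ((x^3 + 2*x^2*y + 2*x^2*z + x*y^2 + x*y*z - x*z^2 - y^2*z - y*z^2)/(4*x*z*(x+y+z)))) B = dist (pt A u v ((-(x^3) - x^2*y + 3*x^2*z + 2*x*y*z + 3*x*z^2 - y*z^2 - z^3)/(4*x*z*(x+y+z))) ((x^3 + 2*x^2*y + 2*x^2*z + x*y^2 + x*y*z - x*z^2 - y^2*z - y*z^2)/(4*x*z*(x+y+z)))) HC" by (simp only: not_False_eq_True Ap Bp Cp Hp Ip HAp HBp HCp OAp dist_commute)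
    have "dist (pt A u v ((-(x) + z)/(2*z)) ((x + y)/(2*z))) (pt A u v ((-(x^3) - x^2*y + 3*x^2*z + 2*x*y*z + 3*x*z^2 - y*z^2 - z^3)/(4*x*z*(x+y+z))) ((x^3 + 2*x^2*y + 2*x^2*z + x*y^2 + x*y*z - x*z^2 - y^2*z - y*z^2)/(4*x*z*(x+y+z)))) = dist (pt A u v ((x - z)/(2*x)) ((x - y)/(2*x))) (pt A u v ((-(x^3) - x^2*y + 3*x^2*z + 2*x*y*z + 3*x*z^2 - y*z^2 - z^3)/(4*x*z*(x+y+z))) ((x^3 + 2*x^2*y + 2*x^2*z + x*y^2 + x*y*z - x*z^2 - y^2*z - y*z^2)/(4*x*z*(x+y+z))))"
      by (rule dist_frac_I[OF gu gv guv], unfold G_def, (simp only: power_one mult_1 mult_1_right)?, algebra) (fact dnz)+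
    then show "dist (pt A u v ((-(x^3) - x^2*y + 3*x^2*z + 2*x*y*z + 3*x*z^2 - y*z^2 - z^3)/(4*x*z*(x+y+z))) ((x^3 + 2*x^2*y + 2*x^2*z + x*y^2 + x*y*z - x*z^2 - y^2*z - y*z^2)/(4*x*z*(x+y+z)))) HC = dist (pt A u v ((-(x^3) - x^2*y + 3*x^2*z + 2*x*y*z + 3*x*z^2 - y*z^2 - z^3)/(4*x*z*(x+y+z))) ((x^3 + 2*x^2*y + 2*x^2*z + x*y^2 + x*y*z - x*z^2 - y^2*z - y*z^2)/(4*x*z*(x+y+z)))) HA" by (simp only: not_False_eq_True Ap Bp Cp Hp Ip HAp HBp HCp OAp dist_commute)
  qed
  then have OBp: "pt A u v ((-(x^3) - x^2*y + 3*x^2*z + 2*x*y*z + 3*x*z^2 - y*z^2 - z^3)/(4*x*z*(x+y+z))) ((x^3 + 2*x^2*y + 2*x^2*z + x*y^2 + x*y*z - x*z^2 - y^2*z - y*z^2)/(4*x*z*(x+y+z))) = OB" unfolding OB_def by simp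
  have "circumcenter C HA HB = pt A u v ((x^3 + 2*x^2*y + 2*x^2*z - x*y^2 + x*y*z + x*z^2 - y^2*z - y*z^2)/(4*x*y*(x+y+z))) ((-(x^3) + 3*x^2*y - x^2*z + 3*x*y^2 + 2*x*y*z - y^3 - y^2*z)/(4*x*y*(x+y+z)))"
  proof (rule circ_eq)
    show "\<not> collinear {C, HA, HB}" by (rule tC)
    have "dist (pt A u v ((0)/(1)) ((1)/(1))) (pt A u v ((x^3 + 2*x^2*y + 2*x^2*z - x*y^2 + x*y*z + x*z^2 - y^2*z - y*z^2)/(4*x*y*(x+y+z))) ((-(x^3) + 3*x^2*y - x^2*z + 3*x*y^2 + 2*x*y*z - y^3 - y^2*z)/(4*x*y*(x+y+z)))) = dist (pt A u v ((x - z)/(2*x)) ((x - y)/(2*x))) (pt A u v ((x^3 + 2*x^2*y + 2*x^2*z - x*y^2 + x*y*z + x*z^2 - y^2*z - y*z^2)/(4*x*y*(x+y+z))) ((-(x^3) + 3*x^2*y - x^2*z + 3*x*y^2 + 2*x*y*z - y^3 - y^2*z)/(4*x*y*(x+y+z))))"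
      by (rule dist_frac_I[OF gu gv guv], unfold G_def, (simp only: power_one mult_1 mult_1_right)?, algebra) (fact dnz)+
    then show "dist (pt A u v ((x^3 + 2*x^2*y + 2*x^2*z - x*y^2 + x*y*z + x*z^2 - y^2*z - y*z^2)/(4*x*y*(x+y+z))) ((-(x^3) + 3*x^2*y - x^2*z + 3*x*y^2 + 2*x*y*z - y^3 - y^2*z)/(4*x*y*(x+y+z)))) C = dist (pt A u v ((x^3 + 2*x^2*y + 2*x^2*z - x*y^2 + x*y*z + x*z^2 - y^2*z - y*z^2)/(4*x*y*(x+y+z))) ((-(x^3) + 3*x^2*y - x^2*z + 3*x*y^2 + 2*x*y*z - y^3 - y^2*z)/(4*x*y*(x+y+z)))) HA" by (simp only: not_False_eq_True Ap Bp Cp Hp Ip HAp HBp HCp OAp OBp dist_commute)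
    have "dist (pt A u v ((x - z)/(2*x)) ((x - y)/(2*x))) (pt A u v ((x^3 + 2*x^2*y + 2*x^2*z - x*y^2 + x*y*z + x*z^2 - y^2*z - y*z^2)/(4*x*y*(x+y+z))) ((-(x^3) + 3*x^2*y - x^2*z + 3*x*y^2 + 2*x*y*z - y^3 - y^2*z)/(4*x*y*(x+y+z)))) = dist (pt A u v ((x + z)/(2*y)) ((-(x) + y)/(2*y))) (pt A u v ((x^3 + 2*x^2*y + 2*x^2*z - x*y^2 + x*y*z + x*z^2 - y^2*z - y*z^2)/(4*x*y*(x+y+z))) ((-(x^3) + 3*x^2*y - x^2*z + 3*x*y^2 + 2*x*y*z - y^3 - y^2*z)/(4*x*y*(x+y+z))))"
      by (rule dist_frac_I[OF gu gv guv], unfold G_def, (simp only: power_one mult_1 mult_1_right)?, algebra) (fact dnz)+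
    then show "dist (pt A u v ((x^3 + 2*x^2*y + 2*x^2*z - x*y^2 + x*y*z + x*z^2 - y^2*z - y*z^2)/(4*x*y*(x+y+z))) ((-(x^3) + 3*x^2*y - x^2*z + 3*x*y^2 + 2*x*y*z - y^3 - y^2*z)/(4*x*y*(x+y+z)))) HA = dist (pt A u v ((x^3 + 2*x^2*y + 2*x^2*z - x*y^2 + x*y*z + x*z^2 - y^2*z - y*z^2)/(4*x*y*(x+y+z))) ((-(x^3) + 3*x^2*y - x^2*z + 3*x*y^2 + 2*x*y*z - y^3 - y^2*z)/(4*x*y*(x+y+z)))) HB" by (simp only: not_False_eq_True Ap Bp Cp Hp Ip HAp HBp HCp OAp OBp dist_commute)
  qed
  then have OCp: "pt A u v ((x^3 + 2*x^2*y + 2*x^2*z - x*y^2 + x*y*z + x*z^2 - y^2*z - y*z^2)/(4*x*y*(x+y+z))) ((-(x^3) + 3*x^2*y - x^2*z + 3*x*y^2 + 2*x*y*z - y^3 - y^2*z)/(4*x*y*(x+y+z))) = OC" unfolding OC_def by simp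
  have "circumcenter OA OB OC = pt A u v ((-(x^3*y) + x^3*z - x^2*y^2 + 5*x^2*y*z + 2*x^2*z^2 - 2*x*y^2*z + 5*x*y*z^2 + x*z^3 - y^2*z^2 - y*z^3)/(8*x*y*z*(x+y+z))) ((x^3*y - x^3*z + 2*x^2*y^2 + 5*x^2*y*z - x^2*z^2 + x*y^3 + 5*x*y^2*z - 2*x*y*z^2 - y^3*z - y^2*z^2)/(8*x*y*z*(x+y+z)))"
  proof (rule circ_eq)
    show "\<not> collinear {OA, OB, OC}" by (rule tO)
    have "dist (pt A u v ((-(x^2*y) + x^2*z - x*y^2 + x*y*z + 2*x*z^2 - y^2*z + 2*y*z^2 + z^3)/(4*y*z*(x+y+z))) ((x^2*y - x^2*z + 2*x*y^2 + x*y*z - x*z^2 + y^3 + 2*y^2*z - y*z^2)/(4*y*z*(x+y+z)))) (pt A u v ((-(x^3*y) + x^3*z - x^2*y^2 + 5*x^2*y*z + 2*x^2*z^2 - 2*x*y^2*z + 5*x*y*z^2 + x*z^3 - y^2*z^2 - y*z^3)/(8*x*y*z*(x+y+z))) ((x^3*y - x^3*z + 2*x^2*y^2 + 5*x^2*y*z - x^2*z^2 + x*y^3 + 5*x*y^2*z - 2*x*y*z^2 - y^3*z - y^2*z^2)/(8*x*y*z*(x+y+z)))) = dist (pt A u v ((-(x^3) - x^2*y + 3*x^2*z + 2*x*y*z + 3*x*z^2 - y*z^2 - z^3)/(4*x*z*(x+y+z))) ((x^3 + 2*x^2*y + 2*x^2*z + x*y^2 + x*y*z - x*z^2 - y^2*z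 - y*z^2)/(4*x*z*(x+y+z)))) (pt A u v ((-(x^3*y) + x^3*z - x^2*y^2 + 5*x^2*y*z + 2*x^2*z^2 - 2*x*y^2*z + 5*x*y*z^2 + x*z^3 - y^2*z^2 - y*z^3)/(8*x*y*z*(x+y+z))) ((x^3*y - x^3*z + 2*x^2*y^2 + 5*x^2*y*z - x^2*z^2 + x*y^3 + 5*x*y^2*z - 2*x*y*z^2 - y^3*z - y^2*z^2)/(8*x*y*z*(x+y+z))))"
      by (rule dist_frac_I[OF gu gv guv], unfold G_def, (simp only: power_one mult_1 mult_1_right)?, algebra) (fact dnz)+
    then show "dist (pt A u v ((-(x^3*y) + x^3*z - x^2*y^2 + 5*x^2*y*z + 2*x^2*z^2 - 2*x*y^2*z + 5*x*y*z^2 + x*z^3 - y^2*z^2 - y*z^3)/(8*x*y*z*(x+y+z))) ((x^3*y - x^3*z + 2*x^2*y^2 + 5*x^2*y*z - x^2*z^2 + x*y^3 + 5*x*y^2*z - 2*x*y*z^2 - y^3*z - y^2*z^2)/(8*x*y*z*(x+y+z)))) OA = dist (pt A u v ((-(x^3*y) + x^3*z - x^2*y^2 + 5*x^2*y*z + 2*x^2*z^2 - 2*x*y^2*z + 5*x*y*z^2 + x*z^3 - y^2*z^2 - y*z^3)/(8*x*y*z*(x+y+z))) ((x^3*y - x^3*z + 2*x^2*y^2 + 5*x^2*y*z - x^2*z^2 + x*y^3 + 5*x*y^2*z - 2*x*y*z^2 - y^3*z - y^2*z^2)/(8*x*y*z*(x+y+z)))) OB" by (simp only: not_False_eq_True Ap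 Bp Cp Hp Ip HAp HBp HCp OAp OBp OCp dist_commute)
    have "dist (pt A u v ((-(x^3) - x^2*y + 3*x^2*z + 2*x*y*z + 3*x*z^2 - y*z^2 - z^3)/(4*x*z*(x+y+z))) ((x^3 + 2*x^2*y + 2*x^2*z + x*y^2 + x*y*z - x*z^2 - y^2*z - y*z^2)/(4*x*z*(x+y+z)))) (pt A u v ((-(x^3*y) + x^3*z - x^2*y^2 + 5*x^2*y*z + 2*x^2*z^2 - 2*x*y^2*z + 5*x*y*z^2 + x*z^3 - y^2*z^2 - y*z^3)/(8*x*y*z*(x+y+z))) ((x^3*y - x^3*z + 2*x^2*y^2 + 5*x^2*y*z - x^2*z^2 + x*y^3 + 5*x*y^2*z - 2*x*y*z^2 - y^3*z - y^2*z^2)/(8*x*y*z*(x+y+z)))) = dist (pt A u v ((x^3 + 2*x^2*y + 2*x^2*z - x*y^2 + x*y*z + x*z^2 - y^2*z - y*z^2)/(4*x*y*(x+y+z))) ((-(x^3) + 3*x^2*y - x^2*z + 3*x*y^2 + 2*x*y*z - y^3 - y^2*z)/(4*x*y*(x+y+z)))) (pt A u v ((-(x^3*y) + x^3*z - x^2*y^2 + 5*x^2*y*z + 2*x^2*z^2 - 2*x*y^2*z + 5*x*y*z^2 + x*z^3 - y^2*z^2 - y*z^3)/(8*x*y*z*(x+y+z))) ((x^3*y - x^3*z + 2*x^2*y^2 + 5*x^2*y*z - x^2*z^2 + x*y^3 + 5*x*y^2*z - 2*x*y*z^2 - y^3*z - y^2*z^2)/(8*x*y*z*(x+y+z))))"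
      by (rule dist_frac_I[OF gu gv guv], unfold G_def, (simp only: power_one mult_1 mult_1_right)?, algebra) (fact dnz)+
    then show "dist (pt A u v ((-(x^3*y) + x^3*z - x^2*y^2 + 5*x^2*y*z + 2*x^2*z^2 - 2*x*y^2*z + 5*x*y*z^2 + x*z^3 - y^2*z^2 - y*z^3)/(8*x*y*z*(x+y+z))) ((x^3*y - x^3*z + 2*x^2*y^2 + 5*x^2*y*z - x^2*z^2 + x*y^3 + 5*x*y^2*z - 2*x*y*z^2 - y^3*z - y^2*z^2)/(8*x*y*z*(x+y+z)))) OB = dist (pt A u v ((-(x^3*y) + x^3*z - x^2*y^2 + 5*x^2*y*z + 2*x^2*z^2 - 2*x*y^2*z + 5*x*y*z^2 + x*z^3 - y^2*z^2 - y*z^3)/(8*x*y*z*(x+y+z))) ((x^3*y - x^3*z + 2*x^2*y^2 + 5*x^2*y*z - x^2*z^2 + x*y^3 + 5*x*y^2*z - 2*x*y*z^2 - y^3*z - y^2*z^2)/(8*x*y*z*(x+y+z)))) OC" by (simp only: not_False_eq_True Ap Bp Cp Hp Ip HAp HBp HCp OAp OBp OCp dist_commute)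
  qed
  then have Orp: "pt A u v ((-(x^3*y) + x^3*z - x^2*y^2 + 5*x^2*y*z + 2*x^2*z^2 - 2*x*y^2*z + 5*x*y*z^2 + x*z^3 - y^2*z^2 - y*z^3)/(8*x*y*z*(x+y+z))) ((x^3*y - x^3*z + 2*x^2*y^2 + 5*x^2*y*z - x^2*z^2 + x*y^3 + 5*x*y^2*z - 2*x*y*z^2 - y^3*z - y^2*z^2)/(8*x*y*z*(x+y+z))) = Or" unfolding Or_def by simp
  have "Im (cnj (pt A u v ((-(x^3) - x^2*y + 3*x^2*z + 2*x*y*z + 3*x*z^2 - y*z^2 - z^3)/(4*x*z*(x+y+z))) ((x^3 + 2*x^2*y + 2*x^2*z + x*y^2 + x*y*z - x*z^2 - y^2*z - y*z^2)/(4*x*z*(x+y+z))) - pt A u v ((-(x^2*y) + x^2*z - x*y^2 + x*y*z + 2*x*z^2 - y^2*z + 2*y*z^2 + z^3)/(4*y*z*(x+y+z))) ((x^2*y - x^2*z + 2*x*y^2 + x*y*z - x*z^2 + y^3 + 2*y^2*z - y*z^2)/(4*y*z*(x+y+z)))) * (pt A u v ((x^3 + 2*x^2*y + 2*x^2*z - x*y^2 + x*y*z + x*z^2 - y^2*z - y*z^2)/(4*x*y*(x+y+z))) ((-(x^3) + 3*x^2*y - x^2*z + 3*x*y^2 + 2*x*y*z - y^3 - y^2*z)/(4*x*y*(x+y+z))) - pt A u v ((-(x^2*y) + x^2*z - x*y^2 + x*y*z + 2*x*z^2 - y^2*z + 2*y*z^2 + z^3)/(4*y*z*(x+y+z)))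 ((x^2*y - x^2*z + 2*x*y^2 + x*y*z - x*z^2 + y^3 + 2*y^2*z - y*z^2)/(4*y*z*(x+y+z))))) \<noteq> 0"
    using tO unfolding cross_collinear_iff by (simp only: not_False_eq_True Ap Bp Cp Hp Ip HAp HBp HCp OAp OBp OCp Orp)
  then have "(((4*y*z*(x+y+z))*(-(x^3) - x^2*y + 3*x^2*z + 2*x*y*z + 3*x*z^2 - y*z^2 - z^3) - (4*x*z*(x+y+z))*(-(x^2*y) + x^2*z - x*y^2 + x*y*z + 2*x*z^2 - y^2*z + 2*y*z^2 + z^3))*((4*y*z*(x+y+z))*(-(x^3) + 3*x^2*y - x^2*z + 3*x*y^2 + 2*x*y*z - y^3 - y^2*z) - (4*x*y*(x+y+z))*(x^2*y - x^2*z + 2*x*y^2 + x*y*z - x*z^2 + y^3 + 2*y^2*z - y*z^2)) - ((4*y*z*(x+y+z))*(x^3 + 2*x^2*y + 2*x^2*z + x*y^2 + x*y*z - x*z^2 - y^2*z - y*z^2) - (4*x*z*(x+y+z))*(x^2*y - x^2*z + 2*x*y^2 + x*y*z - x*z^2 + y^3 + 2*y^2*z - y*z^2))*((4*y*z*(x+y+z))*(x^3 + 2*x^2*y + 2*x^2*z - x*y^2 + x*y*z + x*z^2 - y^2*z - y*z^2) - (4*x*y*(x+y+z))*(-(x^2*y) + x^2*z - x*y^2 + x*y*z + 2*x*z^2 - y^2*z + 2*y*z^2 + z^3))) \<noteq> 0" (is "?N \<noteq> 0")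
    by (rule cross_frac_D) (fact dnz)+
  have Mnz: "x^2*y + x^2*z + x*y^2 + x*z^2 + y^2*z + y*z^2 - 6*x*y*z \<noteq> 0"
  proof
    assume "x^2*y + x^2*z + x*y^2 + x*z^2 + y^2*z + y*z^2 - 6*x*y*z = 0"
    then have "?N = 0" by algebra
    then show False using \<open>?N \<noteq> 0\<close> by simp
  qed
  have Mnzs: "(x+y+z)*(x^2*y + x^2*z + x*y^2 + x*z^2 + y^2*z + y*z^2 - 6*x*y*z) \<noteq> 0" using Mnz snz by simp
  note dnz = dnz Mnzs
  have dA: "(1::real) \<noteq> 0" by (fact dnz)
  have dB: "(1::real) \<noteq> 0" by (fact dnz)
  have dC: "(1::real) \<noteq> 0" by (fact dnz)
  have dOA: "(4*y*z*(x+y+z)::real) \<noteq> 0" by (fact dnz)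
  have dOB: "(4*x*z*(x+y+z)::real) \<noteq> 0" by (fact dnz)
  have dOC: "(4*x*y*(x+y+z)::real) \<noteq> 0" by (fact dnz)
  have dXv: "(1::real) \<noteq> 0" by simp
  let ?X0 = "pt A u v ((2*x^3*y + x^2*y^2 - 3*x^2*y*z - x*y^3 + 2*x*y^2*z - 3*x*y*z^2 - y^3*z + y^2*z^2 + 2*y*z^3)/((x+y+z)*(x^2*y + x^2*z + x*y^2 + x*z^2 + y^2*z + y*z^2 - 6*x*y*z))) ((2*x^3*z - 3*x^2*y*z + x^2*z^2 - 3*x*y^2*z + 2*x*y*z^2 - x*z^3 + 2*y^3*z + y^2*z^2 - y*z^3)/((x+y+z)*(x^2*y + x^2*z + x*y^2 + x*z^2 + y^2*z + y*z^2 - 6*x*y*z)))"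
  have ex: "on_circumcircle ?X0 A HB HC \<and> on_circumcircle ?X0 B HC HA \<and> on_circumcircle ?X0 C HA HB"
    unfolding on_circumcircle_def OA_def[symmetric] OB_def[symmetric] OC_def[symmetric]
  proof (intro conjI)
    have "dist (pt A u v ((2*x^3*y + x^2*y^2 - 3*x^2*y*z - x*y^3 + 2*x*y^2*z - 3*x*y*z^2 - y^3*z + y^2*z^2 + 2*y*z^3)/((x+y+z)*(x^2*y + x^2*z + x*y^2 + x*z^2 + y^2*z + y*z^2 - 6*x*y*z))) ((2*x^3*z - 3*x^2*y*z + x^2*z^2 - 3*x*y^2*z + 2*x*y*z^2 - x*z^3 + 2*y^3*z + y^2*z^2 - y*z^3)/((x+y+z)*(x^2*y + x^2*z + x*y^2 + x*z^2 + y^2*z + y*z^2 - 6*x*y*z)))) (pt A u v ((-(x^2*y) + x^2*z - x*y^2 + x*y*z + 2*x*z^2 - y^2*z + 2*y*z^2 + z^3)/(4*y*z*(x+y+z))) ((x^2*y - x^2*z + 2*x*y^2 + x*y*z - x*z^2 + y^3 + 2*y^2*z - y*z^2)/(4*y*z*(x+y+z)))) = dist (pt A u v ((0)/(1)) ((0)/(1))) (pt A u v ((-(x^2*y) + x^2*z - x*y^2 + x*y*z + 2*x*z^2 - y^2*z + 2*y*z^2 + z^3)/(4*y*z*(x+y+z))) ((x^2*y - x^2*z + 2*x*y^2 + x*y*z - x*z^2 + y^3 + 2*y^2*z - y*z^2)/(4*y*z*(x+y+z))))"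
      by (rule dist_frac_I[OF gu gv guv], unfold G_def, (simp only: power_one mult_1 mult_1_right)?, algebra) (fact dnz)+
    then show "dist ?X0 OA = dist A OA" by (simp only: not_False_eq_True Ap Bp Cp Hp Ip HAp HBp HCp OAp OBp OCp Orp)
    have "dist (pt A u v ((2*x^3*y + x^2*y^2 - 3*x^2*y*z - x*y^3 + 2*x*y^2*z - 3*x*y*z^2 - y^3*z + y^2*z^2 + 2*y*z^3)/((x+y+z)*(x^2*y + x^2*z + x*y^2 + x*z^2 + y^2*z + y*z^2 - 6*x*y*z))) ((2*x^3*z - 3*x^2*y*z + x^2*z^2 - 3*x*y^2*z + 2*x*y*z^2 - x*z^3 + 2*y^3*z + y^2*z^2 - y*z^3)/((x+y+z)*(x^2*y + x^2*z + x*y^2 + x*z^2 + y^2*z + y*z^2 - 6*x*y*z)))) (pt A u v ((-(x^3) - x^2*y + 3*x^2*z + 2*x*y*z + 3*x*z^2 - y*z^2 - z^3)/(4*x*z*(x+y+z))) ((x^3 + 2*x^2*y + 2*x^2*z + x*y^2 + x*y*z - x*z^2 - y^2*z - y*z^2)/(4*x*z*(x+y+z)))) = dist (pt A u v ((1)/(1)) ((0)/(1))) (pt A u v ((-(x^3) - x^2*y + 3*x^2*z + 2*x*y*z + 3*x*z^2 - y*z^2 - z^3)/(4*x*z*(x+y+z))) ((x^3 + 2*x^2*y + 2*x^2*z + x*y^2 + x*y*z - x*z^2 - y^2*z - y*z^2)/(4*x*z*(x+y+z))))"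
      by (rule dist_frac_I[OF gu gv guv], unfold G_def, (simp only: power_one mult_1 mult_1_right)?, algebra) (fact dnz)+
    then show "dist ?X0 OB = dist B OB" by (simp only: not_False_eq_True Ap Bp Cp Hp Ip HAp HBp HCp OAp OBp OCp Orp)
    have "dist (pt A u v ((2*x^3*y + x^2*y^2 - 3*x^2*y*z - x*y^3 + 2*x*y^2*z - 3*x*y*z^2 - y^3*z + y^2*z^2 + 2*y*z^3)/((x+y+z)*(x^2*y + x^2*z + x*y^2 + x*z^2 + y^2*z + y*z^2 - 6*x*y*z))) ((2*x^3*z - 3*x^2*y*z + x^2*z^2 - 3*x*y^2*z + 2*x*y*z^2 - x*z^3 + 2*y^3*z + y^2*z^2 - y*z^3)/((x+y+z)*(x^2*y + x^2*z + x*y^2 + x*z^2 + y^2*z + y*z^2 - 6*x*y*z)))) (pt A u v ((x^3 + 2*x^2*y + 2*x^2*z - x*y^2 + x*y*z + x*z^2 - y^2*z - y*z^2)/(4*x*y*(x+y+z))) ((-(x^3) + 3*x^2*y - x^2*z + 3*x*y^2 + 2*x*y*z - y^3 - y^2*z)/(4*x*y*(x+y+z)))) = dist (pt A u v ((0)/(1)) ((1)/(1))) (pt A u v ((x^3 + 2*x^2*y + 2*x^2*z - x*y^2 + x*y*z + x*z^2 - y^2*z - y*z^2)/(4*x*y*(x+y+z))) ((-(x^3) + 3*x^2*y - x^2*z + 3*x*y^2 + 2*x*y*z - y^3 - y^2*z)/(4*x*y*(x+y+z))))"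
      by (rule dist_frac_I[OF gu gv guv], unfold G_def, (simp only: power_one mult_1 mult_1_right)?, algebra) (fact dnz)+
    then show "dist ?X0 OC = dist C OC" by (simp only: not_False_eq_True Ap Bp Cp Hp Ip HAp HBp HCp OAp OBp OCp Orp)
  qed
  have all: "collinear {Or, H, X}" if h: "on_circumcircle X A HB HC \<and> on_circumcircle X B HC HA \<and> on_circumcircle X C HA HB" for X
  proof -
    obtain p q where "X = pt A u v p q" using basis_pt[OF Dnz] by blast
    then have Xp: "pt A u v (p/1) (q/1) = X" by simp
    have "dist X OA = dist A OA" using h unfolding on_circumcircle_def OA_def[symmetric] OB_def[symmetric] OC_def[symmetric] by blast
    then have "dist (pt A u v ((p)/(1)) ((q)/(1))) (pt A u v ((-(x^2*y) + x^2*z - x*y^2 + x*y*z + 2*x*z^2 - y^2*z + 2*y*z^2 + z^3)/(4*y*z*(x+y+z))) ((x^2*y - x^2*z + 2*x*y^2 + x*y*z - x*z^2 + y^3 + 2*y^2*z - y*z^2)/(4*y*z*(x+y+z)))) = dist (pt A u v ((0)/(1)) ((0)/(1))) (pt A u v ((-(x^2*y) + x^2*z - x*y^2 + x*y*z + 2*x*z^2 - y^2*z + 2*y*z^2 + z^3)/(4*y*z*(x+y+z))) ((x^2*y - x^2*z + 2*x*y^2 + x*y*z - x*z^2 + y^3 + 2*y^2*z - y*z^2)/(4*y*z*(x+y+z))))" by (simp only: Xp not_False_eq_True Ap Bp Cp Hp Ip HAp HBp HCp OAp OBp OCp Orp)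
    note E0 = dist_frac_D[OF gu gv guv this dXv dA dOA]
    have "dist X OB = dist B OB" using h unfolding on_circumcircle_def OA_def[symmetric] OB_def[symmetric] OC_def[symmetric] by blast
    then have "dist (pt A u v ((p)/(1)) ((q)/(1))) (pt A u v ((-(x^3) - x^2*y + 3*x^2*z + 2*x*y*z + 3*x*z^2 - y*z^2 - z^3)/(4*x*z*(x+y+z))) ((x^3 + 2*x^2*y + 2*x^2*z + x*y^2 + x*y*z - x*z^2 - y^2*z - y*z^2)/(4*x*z*(x+y+z)))) = dist (pt A u v ((1)/(1)) ((0)/(1))) (pt A u v ((-(x^3) - x^2*y + 3*x^2*z + 2*x*y*z + 3*x*z^2 - y*z^2 - z^3)/(4*x*z*(x+y+z))) ((x^3 + 2*x^2*y + 2*x^2*z + x*y^2 + x*y*z - x*z^2 - y^2*z - y*z^2)/(4*x*z*(x+y+z))))" by (simp only: Xp not_False_eq_True Ap Bp Cp Hp Ip HAp HBp HCp OAp OBp OCp Orp)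
    note E1 = dist_frac_D[OF gu gv guv this dXv dB dOB]
    have "dist X OC = dist C OC" using h unfolding on_circumcircle_def OA_def[symmetric] OB_def[symmetric] OC_def[symmetric] by blast
    then have "dist (pt A u v ((p)/(1)) ((q)/(1))) (pt A u v ((x^3 + 2*x^2*y + 2*x^2*z - x*y^2 + x*y*z + x*z^2 - y^2*z - y*z^2)/(4*x*y*(x+y+z))) ((-(x^3) + 3*x^2*y - x^2*z + 3*x*y^2 + 2*x*y*z - y^3 - y^2*z)/(4*x*y*(x+y+z)))) = dist (pt A u v ((0)/(1)) ((1)/(1))) (pt A u v ((x^3 + 2*x^2*y + 2*x^2*z - x*y^2 + x*y*z + x*z^2 - y^2*z - y*z^2)/(4*x*y*(x+y+z))) ((-(x^3) + 3*x^2*y - x^2*z + 3*x*y^2 + 2*x*y*z - y^3 - y^2*z)/(4*x*y*(x+y+z))))" by (simp only: Xp not_False_eq_True Ap Bp Cp Hp Ip HAp HBp HCp OAp OBp OCp Orp)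
    note E2 = dist_frac_D[OF gu gv guv this dXv dC dOC]
    have "((8*x*y*z*(x+y+z))*(-(x^3*y) + x^3*z - x^2*y^2 + x^2*y*z + 2*x^2*z^2 + 2*x*y^2*z + x*y*z^2 + x*z^3 - y^2*z^2 - y*z^3) - (4*x*y*z*(x+y+z))*(-(x^3*y) + x^3*z - x^2*y^2 + 5*x^2*y*z + 2*x^2*z^2 - 2*x*y^2*z + 5*x*y*z^2 + x*z^3 - y^2*z^2 - y*z^3))*((8*x*y*z*(x+y+z))*(q) - (1)*(x^3*y - x^3*z + 2*x^2*y^2 + 5*x^2*y*z - x^2*z^2 + x*y^3 + 5*x*y^2*z - 2*x*y*z^2 - y^3*z - y^2*z^2)) - ((8*x*y*z*(x+y+z))*(x^3*y - x^3*z + 2*x^2*y^2 + x^2*y*z - x^2*z^2 + x*y^3 + x*y^2*z + 2*x*y*z^2 - y^3*z - y^2*z^2) - (4*x*y*z*(x+y+z))*(x^3*y - x^3*z + 2*x^2*y^2 + 5*x^2*y*z - x^2*z^2 + x*y^3 + 5*x*y^2*z - 2*x*y*z^2 - y^3*z - y^2*z^2))*((8*x*y*z*(x+y+z))*(p) - (1)*(-(x^3*y) + x^3*z - x^2*y^2 + 5*x^2*y*z + 2*x^2*z^2 - 2*x*y^2*z + 5*x*y*z^2 + x*z^3 - y^2*z^2 - y*z^3)) = 0"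
      using E0 E1 E2 Mnz xnz ynz znz snz unfolding G_def power_one mult_1 mult_1_right by algebra
    then have "Im (cnj (pt A u v ((-(x^3*y) + x^3*z - x^2*y^2 + x^2*y*z + 2*x^2*z^2 + 2*x*y^2*z + x*y*z^2 + x*z^3 - y^2*z^2 - y*z^3)/(4*x*y*z*(x+y+z))) ((x^3*y - x^3*z + 2*x^2*y^2 + x^2*y*z - x^2*z^2 + x*y^3 + x*y^2*z + 2*x*y*z^2 - y^3*z - y^2*z^2)/(4*x*y*z*(x+y+z))) - pt A u v ((-(x^3*y) + x^3*z - x^2*y^2 + 5*x^2*y*z + 2*x^2*z^2 - 2*x*y^2*z + 5*x*y*z^2 + x*z^3 - y^2*z^2 - y*z^3)/(8*x*y*z*(x+y+z))) ((x^3*y - x^3*z + 2*x^2*y^2 + 5*x^2*y*z - x^2*z^2 + x*y^3 + 5*x*y^2*z - 2*x*y*z^2 - y^3*z - y^2*z^2)/(8*x*y*z*(x+y+z)))) * (pt A u v ((p)/(1)) ((q)/(1)) - pt A u v ((-(x^3*y) + x^3*z - x^2*y^2 + 5*x^2*y*z + 2*x^2*z^2 - 2*x*y^2*z + 5*x*y*z^2 + x*z^3 - y^2*z^2 - y*z^3)/(8*x*y*z*(x+y+z))) ((x^3*y - x^3*z + 2*x^2*y^2 + 5*x^2*y*z - x^2*z^2 + x*y^3 + 5*x*y^2*z - 2*x*y*z^2 - y^3*z - y^2*z^2)/(8*x*y*z*(x+y+z))))) = 0"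
      by (rule cross_frac_zero) (fact dnz)+
    then show ?thesis unfolding cross_collinear_iff by (simp only: Xp not_False_eq_True Ap Bp Cp Hp Ip HAp HBp HCp OAp OBp OCp Orp)
  qed
  show ?thesis using ex all by blast
qed

end
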